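(* For every positive integer $n$, $k(n)\ge\sqrt{n}$.
   Context: A system on $n$ elements is a triple $(\mathcal{F},w,s)$ where $\mathcal{F}=(F_1,\dots,F_m)$ is a collection of subsets of $[n]$, $w\in[0,1]^m$ with $\sum_i w_i=1$, and $s\in[0,1]^{m\times m\times n}$ with $\sum_p s_{ijp}=1$ for all $i,j$. It is intersecting if $s_{ijp}>0$ implies $p\in F_i\cap F_j$. It is balanced if for all $p\in[n]$, $\sum_{i,j} w_iw_js_{ijp}=1/n$. Its cardinality is the size of the largest set in $\mathcal{F}$. $k(n)$ is the minimum $k$ such that there exists a balanced intersecting system on $n$ elements with cardinality $k$. *)

theory Defs
  imports "HOL-Analysis.Analysis"
begin

definition is_system :: "nat \<Rightarrow> nat \<Rightarrow> (nat \<Rightarrow> nat set) \<Rightarrow> (nat \<Rightarrow> real)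
    \<Rightarrow> (nat \<Rightarrow> nat \<Rightarrow> nat \<Rightarrow> real) \<Rightarrow> bool" where
  "is_system n m F w s \<longleftrightarrow>
     (\<forall>i\<in>{1..m}. F i \<subseteq> {1..n}) \<and>
     (\<forall>i\<in>{1..m}. 0 \<le> w i \<and> w i \<le> 1) \<and>
     (\<Sum>i=1..m. w i) = 1 \<and>
     (\<forall>i\<in>{1..m}. \<forall>j\<in>{1..m}. \<forall>p\<in>{1..n}. 0 \<le> s i j p \<and> s i j p \<le> 1) \<and>
     (\<forall>i\<in>{1..m}. \<forall>j\<in>{1..m}. (\<Sum>p=1..n. s i j p) = 1)"

definition is_intersecting :: "nat \<Rightarrow> nat \<Rightarrow> (nat \<Rightarrow> nat set)
    \<Rightarrow> (nat \<Rightarrow> nat \<Rightarrow> nat \<Rightarrow> real) \<Rightarrow> bool" where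
  "is_intersecting n m F s \<longleftrightarrow>
     (\<forall>i\<in>{1..m}. \<forall>j\<in>{1..m}. \<forall>p\<in>{1..n}. s i j p > 0 \<longrightarrow> p \<in> F i \<inter> F j)"

definition is_balanced :: "nat \<Rightarrow> nat \<Rightarrow> (nat \<Rightarrow> real)
    \<Rightarrow> (nat \<Rightarrow> nat \<Rightarrow> nat \<Rightarrow> real) \<Rightarrow> bool" where
  "is_balanced n m w s \<longleftrightarrow>
     (\<forall>p\<in>{1..n}. (\<Sum>i=1..m. \<Sum>j=1..m. w i * w j * s i j p) = 1 / real n)"

definition system_cardinality :: "nat \<Rightarrow> (nat \<Rightarrow> nat set) \<Rightarrow> nat" where
  "system_cardinality m F = Max ((\<lambda>i. card (F i)) ` {1..m})"

definition k_fun :: "nat \<Rightarrow> nat" where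
  "k_fun n = (LEAST k. \<exists>m F w s. is_system n m F w s \<and> is_intersecting n m F s
      \<and> is_balanced n m w s \<and> system_cardinality m F = k)"

end

theory Submission
  imports Defs
begin

lemma card_bound:
  assumes n: "n \<ge> 1" and sys: "is_system n m F w s" and int: "is_intersecting n m F s"
    and bal: "is_balanced n m w s"
  shows "sqrt (real n) \<le> real (system_cardinality m F)"
proof -
  let ?k = "system_cardinality m F"
  define a where "a p = (\<Sum>i=1..m. if p \<in> F i then w i else 0)" for p
  have w0: "\<And>i. i \<in> {1..m} \<Longrightarrow> 0 \<le> w i" using sys unfolding is_system_def by auto
  have wsum: "(\<Sum>i=1..m. w i) = 1" using sys unfolding is_system_def by auto
  have m1: "m \<ge> 1" using wsum by (cases m) auto
  have Fsub: "\<And>i. i \<in> {1..m} \<Longrightarrow> F i \<subseteq> {1..n}" using sys unfolding is_system_def by auto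
  have a0: "0 \<le> a p" for p unfolding a_def by (rule sum_nonneg) (auto intro: w0)
  have sq: "1 / real n \<le> (a p)^2" if p: "p \<in> {1..n}" for p
  proof -
    have "1 / real n = (\<Sum>i=1..m. \<Sum>j=1..m. w i * w j * s i j p)" using bal p unfolding is_balanced_def by auto
    also have "\<dots> \<le> (\<Sum>i=1..m. \<Sum>j=1..m. (if p \<in> F i then w i else 0) * (if p \<in> F j then w j else 0))"
    proof (intro sum_mono)
      fix i j assume i: "i \<in> {1..m}" and j: "j \<in> {1..m}"
      have s01: "0 \<le> s i j p" "s i j p \<le> 1" using sys i j p unfolding is_system_def by auto
      show "w i * w j * s i j p \<le> (if p \<in> F i then w i else 0) * (if p \<in> F j then w j else 0)"
      proof (cases "s i j p > 0")
        case True
        then have "p \<in> F i" "p \<in> F j" using int i j p unfolding is_intersecting_def by auto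
        moreover have "w i * w j * s i j p \<le> w i * w j * 1"
          using s01 w0[OF i] w0[OF j] by (intro mult_left_mono) auto
        ultimately show ?thesis by simp
      next
        case False
        then have "s i j p = 0" using s01 by auto
        then show ?thesis using w0[OF i] w0[OF j] by auto
      qed
    qed
    also have "\<dots> = (a p)^2" unfolding a_def power2_eq_square sum_product by simp
    finally show ?thesis .
  qed
  have ap: "1 / sqrt (real n) \<le> a p" if p: "p \<in> {1..n}" for p
  proof -
    have "sqrt (1 / real n) \<le> sqrt ((a p)^2)" using sq[OF p] by (rule real_sqrt_le_mono)
    then show ?thesis using a0[of p] by (simp add: real_sqrt_divide)
  qed
  have fin: "finite ((\<lambda>i. card (F i)) ` {1..m})" by simp
  have cardle: "card (F i) \<le> ?k" if "i \<in> {1..m}" for i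
    unfolding system_cardinality_def using that fin by (intro Max_ge) auto
  have "(\<Sum>p=1..n. a p) = (\<Sum>i=1..m. \<Sum>p=1..n. if p \<in> F i then w i else 0)"
    unfolding a_def by (rule sum.swap)
  also have "\<dots> = (\<Sum>i=1..m. w i * real (card (F i)))"
  proof (rule sum.cong[OF refl])
    fix i assume i: "i \<in> {1..m}"
    have "(\<Sum>p=1..n. if p \<in> F i then w i else 0) = (\<Sum>p\<in>{1..n} \<inter> F i. w i)"
      by (simp add: sum.inter_restrict[symmetric])
    also have "{1..n} \<inter> F i = F i" using Fsub[OF i] by auto
    finally show "(\<Sum>p=1..n. if p \<in> F i then w i else 0) = w i * real (card (F i))" by simp
  qed
  also have "\<dots> \<le> (\<Sum>i=1..m. w i * real ?k)"
    by (intro sum_mono mult_left_mono) (auto intro: w0 cardle)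
  also have "\<dots> = real ?k" using wsum by (simp add: sum_distrib_right[symmetric])
  finally have up: "(\<Sum>p=1..n. a p) \<le> real ?k" .
  have "(\<Sum>p=1..n. 1 / sqrt (real n)) \<le> (\<Sum>p=1..n. a p)" by (intro sum_mono ap)
  moreover have "(\<Sum>p=1..n. 1 / sqrt (real n)) = sqrt (real n)"
    using n by (simp add: real_div_sqrt)
  ultimately show ?thesis using up by linarith
qed

theorem proposition1:
  fixes n :: nat
  assumes "n \<ge> 1"
  shows "real (k_fun n) \<ge> sqrt (real n)"
proof -
  let ?P = "\<lambda>k. \<exists>m F w s. is_system n m F w s \<and> is_intersecting n m F s
      \<and> is_balanced n m w s \<and> system_cardinality m F = k"
  have ex: "?P (system_cardinality 1 (\<lambda>_. {1..n}))"
  proof (intro exI conjI)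
    show "is_system n 1 (\<lambda>_. {1..n}) (\<lambda>_. 1) (\<lambda>_ _ _. 1 / real n)"
      unfolding is_system_def using assms by auto
    show "is_intersecting n 1 (\<lambda>_. {1..n}) (\<lambda>_ _ _. 1 / real n)"
      unfolding is_intersecting_def by auto
    show "is_balanced n 1 (\<lambda>_. 1) (\<lambda>_ _ _. 1 / real n)"
      unfolding is_balanced_def by auto
  qed (rule refl)
  have "?P (k_fun n)" unfolding k_fun_def by (rule LeastI[where P="?P", OF ex])
  then show ?thesis using card_bound[OF assms] by metis
qed

end
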